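(* Let $F$ be a non-archimedean local field. For every $b\in B(\Gamma)^{\flat}$ there is a tropical curve $(\Gamma_b,w_b)$ such that there is a measure-preserving isomorphism $\mathsf{trop}(\pi^{-1}(b))\simeq J(\Gamma_b,w_b)$.
   Context: $\Gamma$ is a finite graph with edge set $E(\Gamma)$; $B(\Gamma)=\mathsf{Spec}\,\mathcal{O}_F[[T_e : e\in E(\Gamma)]]$, $\Delta\subset B(\Gamma)$ is the union of the divisors $(T_e)$, and $B(\Gamma)^{\flat}=B(\Gamma)(\mathcal{O}_F)\cap(B(\Gamma)\setminus\Delta)(F)$. $\pi\colon\mathfrak{V}(\Gamma,\eta)\to B(\Gamma)$ is the hypertoric Hitchin family (Mumford-type quotient of a GIT quotient of $\mathbb{W}^{E(\Gamma)}$ by the lattice $H_1(\Gamma,\mathbb{Z})$); for $b\in B(\Gamma)^{\flat}$ the fibre is the abelian $F$-variety $\pi^{-1}(b)=H^1(\Gamma,\mathbb{G}_{m})/\sigma_b(H_1(\Gamma,\mathbb{Z}))$, where $\sigma_b(\gamma)$ is the class of $(b_e^{\langle\gamma,e\rangle})_{e\in E(\Gamma)}$. For an abelian variety $A=\mathbb{G}_{m}^r/Y$ with $Y$ a discrete group, $\mathsf{trop}(A)=\mathbb{R}^r/\log|Y|$, with the measure induced by Lebesgue measure on $\mathbb{R}^r$. A tropical curve is a pair $(\Gamma,w)$ with $w\colon E(\Gamma)\to\mathbb{Q}_{>0}$; its Jacobian $J(\Gamma,w)$ is the cokernel of $\tau_w\colon H_1(\Gamma,\mathbb{Z})\to H^1(\Gamma,\mathbb{Z})$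 (taken as the torus $H^1(\Gamma,\mathbb{R})/\tau_w(H_1(\Gamma,\mathbb{Z}))$), where $\tau_w(\gamma)=\sum_{e}w(e)\langle\gamma,[e]\rangle[e]$. *)

theory Defs
  imports "HOL-Analysis.Analysis"
begin

definition valuation_ring :: "('f::field \<Rightarrow> real) \<Rightarrow> 'f set" where
  "valuation_ring av = {x. av x \<le> 1}"

definition maximal_ideal :: "('f::field \<Rightarrow> real) \<Rightarrow> 'f set" where
  "maximal_ideal av = {x. av x < 1}"

definition residue_field :: "('f::field \<Rightarrow> real) \<Rightarrow> 'f set set" where
  "residue_field av = valuation_ring av //
     {(x, y). x \<in> valuation_ring av \<and> y \<in> valuation_ring av \<and> av (x - y) < 1}"

definition residue_card :: "('f::field \<Rightarrow> real) \<Rightarrow> real" where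
  "residue_card av = real (card (residue_field av))"

text \<open>av is the normalised absolute value of a non-archimedean local field:
  multiplicative, ultrametric, complete, finite residue field of cardinality q,
  and value group of nonzero elements exactly q^Z (discrete, normalised).\<close>
definition nonarch_local_field :: "('f::field \<Rightarrow> real) \<Rightarrow> bool" where
  "nonarch_local_field av \<longleftrightarrow>
     (\<forall>x. 0 \<le> av x) \<and> (\<forall>x. av x = 0 \<longleftrightarrow> x = 0) \<and>
     (\<forall>x y. av (x * y) = av x * av y) \<and>
     (\<forall>x y. av (x + y) \<le> max (av x) (av y)) \<and>
     finite (residue_field av) \<and>
     av ` (UNIV - {0}) = range (\<lambda>k::int. residue_card av powr real_of_int k) \<and>
     (\<forall>s::nat \<Rightarrow> 'f. (\<forall>\<epsilon>>0. \<exists>N. \<forall>m\<ge>N. \<forall>n\<ge>N. av (s m - s n) < \<epsilon>) \<longrightarrow>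
        (\<exists>l. \<forall>\<epsilon>>0. \<exists>N. \<forall>n\<ge>N. av (s n - l) < \<epsilon>))"

text \<open>log|x| for the normalised absolute value, taken to base q (so log|x| = -v(x)).\<close>
definition loga :: "('f::field \<Rightarrow> real) \<Rightarrow> 'f \<Rightarrow> real" where
  "loga av x = log (residue_card av) (av x)"

text \<open>A finite (multi)graph with vertex set V, edge set E and an auxiliary orientation
  src/tgt (loops and multiple edges allowed).\<close>
definition finite_graph :: "'v set \<Rightarrow> 'e set \<Rightarrow> ('e \<Rightarrow> 'v) \<Rightarrow> ('e \<Rightarrow> 'v) \<Rightarrow> bool" where
  "finite_graph V E src tgt \<longleftrightarrow> finite V \<and> finite E \<and> (\<forall>e\<in>E. src e \<in> V \<and> tgt e \<in> V)"

text \<open>H_1(Gamma,Z): integer 1-chains (supported on E) with zero boundary;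
  the value c e is the pairing <c,e>.\<close>
definition H1 :: "'v set \<Rightarrow> 'e set \<Rightarrow> ('e \<Rightarrow> 'v) \<Rightarrow> ('e \<Rightarrow> 'v) \<Rightarrow> ('e \<Rightarrow> int) set" where
  "H1 V E src tgt = {c. (\<forall>e. e \<notin> E \<longrightarrow> c e = 0) \<and>
     (\<forall>v\<in>V. (\<Sum>e\<in>{e\<in>E. tgt e = v}. c e) = (\<Sum>e\<in>{e\<in>E. src e = v}. c e))}"

definition H1_basis :: "'v set \<Rightarrow> 'e set \<Rightarrow> ('e \<Rightarrow> 'v) \<Rightarrow> ('e \<Rightarrow> 'v) \<Rightarrow> ('n::finite \<Rightarrow> 'e \<Rightarrow> int) \<Rightarrow> bool" where
  "H1_basis V E src tgt gs \<longleftrightarrow> (\<forall>i. gs i \<in> H1 V E src tgt) \<and>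
     (\<forall>c\<in>H1 V E src tgt. \<exists>!k::'n \<Rightarrow> int. c = (\<lambda>e. \<Sum>i\<in>UNIV. k i * gs i e))"

text \<open>Coordinates: a Z-basis gs of H_1 identifies H^1(Gamma,G_m) = Hom(H_1,G_m) with G_m^n
  via x \<mapsto> (prod_e x_e^{<gs i, e>})_i, and H^1(Gamma,R) with R^n, H^1(Gamma,Z) with Z^n.
  sigma_b(gamma) = class of (b_e^{<gamma,e>})_e thus has coordinates below.\<close>
definition sigma_coords :: "'e set \<Rightarrow> ('e \<Rightarrow> 'f::field) \<Rightarrow> ('n::finite \<Rightarrow> 'e \<Rightarrow> int) \<Rightarrow> ('e \<Rightarrow> int) \<Rightarrow> 'f ^ 'n" where
  "sigma_coords E b gs c = (\<chi> i. \<Prod>e\<in>E. b e powi (c e * gs i e))"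

definition fibre_lattice :: "'v set \<Rightarrow> 'e set \<Rightarrow> ('e \<Rightarrow> 'v) \<Rightarrow> ('e \<Rightarrow> 'v) \<Rightarrow> ('e \<Rightarrow> 'f::field) \<Rightarrow> ('n::finite \<Rightarrow> 'e \<Rightarrow> int) \<Rightarrow> ('f ^ 'n) set" where
  "fibre_lattice V E src tgt b gs = sigma_coords E b gs ` H1 V E src tgt"

text \<open>log|Y| in R^n; trop(G_m^n / Y) = R^n / log|Y|.\<close>
definition trop_lattice :: "('f::field \<Rightarrow> real) \<Rightarrow> ('f ^ 'n::finite) set \<Rightarrow> (real ^ 'n) set" where
  "trop_lattice av Y = (\<lambda>y. \<chi> i. loga av (y $ i)) ` Y"

text \<open>tau_w(H_1) in H^1(Gamma,R) = R^n (coordinates w.r.t. the basis hs).\<close>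
definition jacobian_lattice :: "'v set \<Rightarrow> 'e set \<Rightarrow> ('e \<Rightarrow> 'v) \<Rightarrow> ('e \<Rightarrow> 'v) \<Rightarrow> ('e \<Rightarrow> rat) \<Rightarrow> ('n::finite \<Rightarrow> 'e \<Rightarrow> int) \<Rightarrow> (real ^ 'n) set" where
  "jacobian_lattice V E src tgt w hs =
     (\<lambda>c. \<chi> i. \<Sum>e\<in>E. real_of_rat (w e) * real_of_int (c e) * real_of_int (hs i e)) ` H1 V E src tgt"

text \<open>A measure-preserving isomorphism of real tori R^n/L1 ~ R^n/L2 (Lebesgue measure):
  given by a continuous additive bijection of R^n carrying L1 onto L2 (hence inducing
  an isomorphism of the quotient groups) which preserves Lebesgue measure.\<close>
definition torus_mp_iso :: "(real ^ 'n::finite) set \<Rightarrow> (real ^ 'n) set \<Rightarrow> bool" where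
  "torus_mp_iso L1 L2 \<longleftrightarrow> (\<exists>f :: real ^ 'n \<Rightarrow> real ^ 'n.
      continuous_on UNIV f \<and> (\<forall>x y. f (x + y) = f x + f y) \<and> bij f \<and> f ` L1 = L2 \<and>
      f \<in> borel_measurable lborel \<and> distr lborel lborel f = lborel)"

end

theory Submission
  imports Defs
begin

definition transp :: "'e set \<Rightarrow> ('e \<Rightarrow> nat) \<Rightarrow> ('e \<Rightarrow> int) \<Rightarrow> nat \<Rightarrow> int" where
  "transp E \<phi> c = (\<lambda>n. if n \<in> \<phi> ` E then c (inv_into E \<phi> n) else 0)"

lemma transp_phi: "inj_on \<phi> E \<Longrightarrow> e \<in> E \<Longrightarrow> transp E \<phi> c (\<phi> e) = c e"
  by (simp add: transp_def)

lemma transp_sum: "transp E \<phi> (\<lambda>e. \<Sum>i\<in>I. k i * g i e) = (\<lambda>n. \<Sum>i\<in>I. k i * transp E \<phi> (g i) n)"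
  by (auto simp: transp_def)

lemma transp_sum_img:
  assumes "inj_on \<phi> E" "S \<subseteq> E"
  shows "(\<Sum>n\<in>\<phi> ` S. f n * transp E \<phi> c n) = (\<Sum>e\<in>S. f (\<phi> e) * c e)"
proof -
  have "inj_on \<phi> S" using assms inj_on_subset by blast
  then have "(\<Sum>n\<in>\<phi> ` S. f n * transp E \<phi> c n) = (\<Sum>e\<in>S. f (\<phi> e) * transp E \<phi> c (\<phi> e))"
    by (simp add: sum.reindex)
  also have "\<dots> = (\<Sum>e\<in>S. f (\<phi> e) * c e)"
    using assms by (intro sum.cong) (auto simp: transp_phi)
  finally show ?thesis .
qed

lemma transport:
  assumes fg: "finite_graph V E src tgt"
  shows "\<exists>(Vb :: nat set) (srcb :: nat \<Rightarrow> nat) (tgtb :: nat \<Rightarrow> nat) (\<phi> :: 'e \<Rightarrow> nat).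
     finite_graph Vb (\<phi> ` E) srcb tgtb \<and> inj_on \<phi> E \<and>
     H1 Vb (\<phi> ` E) srcb tgtb = transp E \<phi> ` H1 V E src tgt"
proof -
  have fV: "finite V" and fE: "finite E" and st: "\<forall>e\<in>E. src e \<in> V \<and> tgt e \<in> V"
    using fg by (auto simp: finite_graph_def)
  obtain \<phi> :: "'e \<Rightarrow> nat" where "bij_betw \<phi> E {0..<card E}" using ex_bij_betw_finite_nat[OF fE] by blast
  then have iphi: "inj_on \<phi> E" by (simp add: bij_betw_def)
  obtain \<psi> :: "_ \<Rightarrow> nat" where "bij_betw \<psi> V {0..<card V}" using ex_bij_betw_finite_nat[OF fV] by blast
  then have ipsi: "inj_on \<psi> V" by (simp add: bij_betw_def)
  define srcb where "srcb = (\<lambda>n. \<psi> (src (inv_into E \<phi> n)))"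
  define tgtb where "tgtb = (\<lambda>n. \<psi> (tgt (inv_into E \<phi> n)))"
  have fgb: "finite_graph (\<psi> ` V) (\<phi> ` E) srcb tgtb"
    using fV fE st iphi by (auto simp: finite_graph_def srcb_def tgtb_def)
  have keyt: "{n \<in> \<phi> ` E. tgtb n = \<psi> v} = \<phi> ` {e\<in>E. tgt e = v}" if "v \<in> V" for v
  proof -
    have "tgtb (\<phi> e) = \<psi> v \<longleftrightarrow> tgt e = v" if "e \<in> E" for e
      using that \<open>v \<in> V\<close> st iphi ipsi by (auto simp: tgtb_def inj_on_def)
    then show ?thesis by auto
  qed
  have keys: "{n \<in> \<phi> ` E. srcb n = \<psi> v} = \<phi> ` {e\<in>E. src e = v}" if "v \<in> V" for v
  proof -
    have "srcb (\<phi> e) = \<psi> v \<longleftrightarrow> src e = v" if "e \<in> E" for e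
      using that \<open>v \<in> V\<close> st iphi ipsi by (auto simp: srcb_def inj_on_def)
    then show ?thesis by auto
  qed
  have sumt: "(\<Sum>n\<in>{n \<in> \<phi> ` E. tgtb n = \<psi> v}. transp E \<phi> c n) = (\<Sum>e\<in>{e\<in>E. tgt e = v}. c e)"
    if "v \<in> V" for v c
    using transp_sum_img[OF iphi, of "{e\<in>E. tgt e = v}" "\<lambda>_. 1" c] keyt[OF that] by simp
  have sums: "(\<Sum>n\<in>{n \<in> \<phi> ` E. srcb n = \<psi> v}. transp E \<phi> c n) = (\<Sum>e\<in>{e\<in>E. src e = v}. c e)"
    if "v \<in> V" for v c
    using transp_sum_img[OF iphi, of "{e\<in>E. src e = v}" "\<lambda>_. 1" c] keys[OF that] by simp
  have "H1 (\<psi> ` V) (\<phi> ` E) srcb tgtb = transp E \<phi> ` H1 V E src tgt"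
  proof
    show "transp E \<phi> ` H1 V E src tgt \<subseteq> H1 (\<psi> ` V) (\<phi> ` E) srcb tgtb"
    proof clarify
      fix c assume c: "c \<in> H1 V E src tgt"
      show "transp E \<phi> c \<in> H1 (\<psi> ` V) (\<phi> ` E) srcb tgtb"
        unfolding H1_def
      proof (intro CollectI conjI ballI allI impI)
        fix n assume "n \<notin> \<phi> ` E" then show "transp E \<phi> c n = 0" by (simp add: transp_def)
      next
        fix u assume "u \<in> \<psi> ` V"
        then obtain v where v: "v \<in> V" "u = \<psi> v" by blast
        show "(\<Sum>n\<in>{n \<in> \<phi> ` E. tgtb n = u}. transp E \<phi> c n) = (\<Sum>n\<in>{n \<in> \<phi> ` E. srcb n = u}. transp E \<phi> c n)"
          using c v sumt sums by (simp add: H1_def)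
      qed
    qed
  next
    show "H1 (\<psi> ` V) (\<phi> ` E) srcb tgtb \<subseteq> transp E \<phi> ` H1 V E src tgt"
    proof
      fix d assume d: "d \<in> H1 (\<psi> ` V) (\<phi> ` E) srcb tgtb"
      define c where "c = (\<lambda>e. if e \<in> E then d (\<phi> e) else 0)"
      have dc: "d = transp E \<phi> c"
      proof
        fix n show "d n = transp E \<phi> c n"
        proof (cases "n \<in> \<phi> ` E")
          case True
          then obtain e where "e \<in> E" "n = \<phi> e" by blast
          then show ?thesis using iphi by (simp add: transp_phi c_def)
        next
          case False then show ?thesis using d by (simp add: transp_def H1_def)
        qed
      qed
      have "c \<in> H1 V E src tgt"
        unfolding H1_def
      proof (intro CollectI conjI ballI allI impI)
        fix e assume "e \<notin> E" then show "c e = 0" by (simp add: c_def)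
      next
        fix v assume v: "v \<in> V"
        have "(\<Sum>n\<in>{n \<in> \<phi> ` E. tgtb n = \<psi> v}. d n) = (\<Sum>n\<in>{n \<in> \<phi> ` E. srcb n = \<psi> v}. d n)"
          using d v by (auto simp: H1_def)
        then show "(\<Sum>e\<in>{e \<in> E. tgt e = v}. c e) = (\<Sum>e\<in>{e \<in> E. src e = v}. c e)"
          using sumt[OF v, of c] sums[OF v, of c] dc by simp
      qed
      then show "d \<in> transp E \<phi> ` H1 V E src tgt" using dc by blast
    qed
  qed
  then show ?thesis using fgb iphi by blast
qed

lemma transp_inj:
  assumes "inj_on \<phi> E" "\<forall>e. e \<notin> E \<longrightarrow> c1 e = 0" "\<forall>e. e \<notin> E \<longrightarrow> c2 e = 0"
    "transp E \<phi> c1 = transp E \<phi> c2"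
  shows "c1 = c2"
proof
  fix e show "c1 e = c2 e"
  proof (cases "e \<in> E")
    case True
    then show ?thesis using transp_phi[OF assms(1) True, of c1] transp_phi[OF assms(1) True, of c2] assms(4) by simp
  qed (use assms in auto)
qed

lemma basis_transport:
  assumes iphi: "inj_on \<phi> E" and HH: "H1 Vb (\<phi> ` E) srcb tgtb = transp E \<phi> ` H1 V E src tgt"
    and B: "H1_basis V E src tgt (gs :: 'n::finite \<Rightarrow> 'e \<Rightarrow> int)"
  shows "H1_basis Vb (\<phi> ` E) srcb tgtb (\<lambda>i. transp E \<phi> (gs i))"
  unfolding H1_basis_def
proof (intro conjI allI ballI)
  fix i show "transp E \<phi> (gs i) \<in> H1 Vb (\<phi> ` E) srcb tgtb"
    using B HH by (auto simp: H1_basis_def)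
next
  fix d assume "d \<in> H1 Vb (\<phi> ` E) srcb tgtb"
  then obtain c where c: "c \<in> H1 V E src tgt" "d = transp E \<phi> c" using HH by blast
  obtain k where k: "c = (\<lambda>e. \<Sum>i\<in>UNIV. k i * gs i e)"
    and ku: "\<And>k'. c = (\<lambda>e. \<Sum>i\<in>UNIV. k' i * gs i e) \<Longrightarrow> k' = k"
    using B c(1) unfolding H1_basis_def by metis
  have supp: "\<forall>e. e \<notin> E \<longrightarrow> (\<Sum>i\<in>UNIV. k' i * gs i e) = 0" for k'
    using B by (auto simp: H1_basis_def H1_def)
  have csupp: "\<forall>e. e \<notin> E \<longrightarrow> c e = 0" using c(1) by (auto simp: H1_def)
  show "\<exists>!k. d = (\<lambda>e. \<Sum>i\<in>UNIV. k i * transp E \<phi> (gs i) e)"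
  proof
    show "d = (\<lambda>e. \<Sum>i\<in>UNIV. k i * transp E \<phi> (gs i) e)"
      by (simp add: c(2) k transp_sum)
  next
    fix k' assume "d = (\<lambda>e. \<Sum>i\<in>UNIV. k' i * transp E \<phi> (gs i) e)"
    then have "transp E \<phi> c = transp E \<phi> (\<lambda>e. \<Sum>i\<in>UNIV. k' i * gs i e)"
      using c(2) by (simp add: transp_sum)
    then have "c = (\<lambda>e. \<Sum>i\<in>UNIV. k' i * gs i e)"
      using transp_inj[OF iphi csupp supp] by blast
    then show "k' = k" by (rule ku)
  qed
qed

lemma H1_uminus: "c \<in> H1 V E src tgt \<Longrightarrow> (\<lambda>e. - c e) \<in> H1 V E src tgt"
  by (auto simp: H1_def sum_negf)

lemma av_facts:
  assumes "nonarch_local_field av"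
  shows "av 1 = 1" and "\<And>x y. av (x * y) = av x * av y"
    and "\<And>x. x \<noteq> 0 \<Longrightarrow> av (inverse x) = inverse (av x)"
    and "\<And>x (n::nat). av (x ^ n) = av x ^ n"
    and "\<And>x n. x \<noteq> 0 \<Longrightarrow> av (x powi n) = av x powi n"
    and "\<And>f A. av (prod f A) = (\<Prod>a\<in>A. av (f a))"
proof -
  have m: "\<And>x y. av (x * y) = av x * av y" and z: "\<And>x. av x = 0 \<longleftrightarrow> x = 0"
    using assms by (auto simp: nonarch_local_field_def)
  show "\<And>x y. av (x * y) = av x * av y" by (rule m)
  have "av 1 = av 1 * av 1" using m[of 1 1] by simp
  moreover have "av 1 \<noteq> 0" using z by simp
  ultimately show one: "av 1 = 1" by simp
  show inv: "av (inverse x) = inverse (av x)" if "x \<noteq> 0" for x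
  proof -
    have "av (inverse x) * av x = 1" using m[of "inverse x" x] that one by simp
    moreover have "av x \<noteq> 0" using z that by simp
    ultimately show ?thesis by (simp add: field_simps)
  qed
  show pw: "av (x ^ n) = av x ^ n" for x and n :: nat
    by (induction n) (auto simp: one m)
  show "av (x powi n) = av x powi n" if "x \<noteq> 0" for x n
    using that by (simp add: power_int_def pw inv power_inverse)
  show "av (prod f A) = (\<Prod>a\<in>A. av (f a))" for f A
    by (induction A rule: infinite_finite_induct) (auto simp: one m)
qed

lemma ln_powi: "(x::real) > 0 \<Longrightarrow> ln (x powi n) = of_int n * ln x"
  by (metis exp_ln exp_power_int ln_exp)

lemma loga_prod:
  assumes "nonarch_local_field av" "finite E" "\<forall>e\<in>E. b e \<noteq> 0"
  shows "loga av (\<Prod>e\<in>E. b e powi n e) = (\<Sum>e\<in>E. of_int (n e) * loga av (b e))"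
proof -
  have pos: "av (b e) > 0" if "e \<in> E" for e
    using assms that by (auto simp: nonarch_local_field_def order_le_less)
  have eqav: "av (\<Prod>e\<in>E. b e powi n e) = (\<Prod>e\<in>E. av (b e) powi n e)"
    unfolding av_facts(6)[OF assms(1)]
    using av_facts(5)[OF assms(1)] assms(3) by (intro prod.cong) auto
  then have "ln (av (\<Prod>e\<in>E. b e powi n e)) = (\<Sum>e\<in>E. of_int (n e) * ln (av (b e)))"
  proof -
    have "ln (\<Prod>e\<in>E. av (b e) powi n e) = (\<Sum>e\<in>E. ln (av (b e) powi n e))"
      using pos assms(2) by (intro ln_prod) (auto simp: less_imp_neq[symmetric])
    also have "\<dots> = (\<Sum>e\<in>E. of_int (n e) * ln (av (b e)))"
      using pos by (intro sum.cong) (auto simp: ln_powi)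
    finally show ?thesis using eqav by simp
  qed
  then show ?thesis
    by (simp add: loga_def log_def sum_divide_distrib)
qed

lemma loga_int:
  assumes "nonarch_local_field av" "x \<noteq> 0" "av x < 1"
  shows "\<exists>k::int. loga av x = of_int k \<and> k < 0"
proof -
  let ?q = "residue_card av"
  have "av x \<in> av ` (UNIV - {0})" using assms by auto
  moreover have "av ` (UNIV - {0}) = range (\<lambda>k::int. ?q powr real_of_int k)"
    using assms(1) unfolding nonarch_local_field_def by blast
  ultimately obtain k :: int where k: "av x = ?q powr of_int k" by auto
  have pos: "av x > 0" using assms by (auto simp: nonarch_local_field_def order_le_less)
  have q0: "?q \<ge> 0" by (simp add: residue_card_def)
  have "?q \<noteq> 0" using k pos by auto
  moreover have "?q \<noteq> 1" using k assms(3) by auto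
  ultimately have q1: "?q > 1" using q0 by (simp add: residue_card_def)
  have l: "loga av x = of_int k" using k q1 by (simp add: loga_def)
  have "k < 0"
  proof (rule ccontr)
    assume "\<not> k < 0"
    then have "?q powr of_int k \<ge> 1" using q1 by (simp add: ge_one_powr_ge_zero)
    then show False using k assms(3) by simp
  qed
  then show ?thesis using l by blast
qed

lemma image_neg_eq:
  assumes "\<And>c. J c = A (\<lambda>e. - c e)" "\<And>c. c \<in> H \<Longrightarrow> (\<lambda>e. - c e) \<in> H"
  shows "J ` H = A ` (H :: ('e \<Rightarrow> int) set)"
proof
  show "J ` H \<subseteq> A ` H" using assms by auto
  show "A ` H \<subseteq> J ` H"
  proof
    fix x assume "x \<in> A ` H"
    then obtain c where c: "c \<in> H" "x = A c" by blast
    have "x = J (\<lambda>e. - c e)" using c assms(1) by simp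
    then show "x \<in> J ` H" using assms(2)[OF c(1)] by blast
  qed
qed

theorem proposition4p2:
  fixes av :: "'f::field \<Rightarrow> real"
    and V :: "'v set" and E :: "'e set" and src tgt :: "'e \<Rightarrow> 'v"
    and gs :: "'n::finite \<Rightarrow> 'e \<Rightarrow> int"
    and b :: "'e \<Rightarrow> 'f"
  assumes "nonarch_local_field av"
    and "finite_graph V E src tgt"
    and "H1_basis V E src tgt gs"
    and "\<forall>e\<in>E. b e \<in> maximal_ideal av \<and> b e \<noteq> 0"
  shows "\<exists>(Vb :: nat set) (Eb :: nat set) (srcb :: nat \<Rightarrow> nat) (tgtb :: nat \<Rightarrow> nat)
            (wb :: nat \<Rightarrow> rat) (hs :: 'n \<Rightarrow> nat \<Rightarrow> int).
           finite_graph Vb Eb srcb tgtb \<and> (\<forall>e\<in>Eb. 0 < wb e) \<and>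
           H1_basis Vb Eb srcb tgtb hs \<and>
           torus_mp_iso (trop_lattice av (fibre_lattice V E src tgt b gs))
                        (jacobian_lattice Vb Eb srcb tgtb wb hs)"
proof -
  note nl = assms(1)
  have fE: "finite E" using assms(2) by (simp add: finite_graph_def)
  have bnz: "\<forall>e\<in>E. b e \<noteq> 0" using assms(4) by blast
  have "\<forall>e\<in>E. \<exists>k::int. loga av (b e) = of_int k \<and> k < 0"
    using assms(4) loga_int[OF nl] by (auto simp: maximal_ideal_def)
  then obtain k :: "'e \<Rightarrow> int" where k: "\<And>e. e \<in> E \<Longrightarrow> loga av (b e) = of_int (k e) \<and> k e < 0"
    by metis
  obtain Vb :: "nat set" and srcb tgtb :: "nat \<Rightarrow> nat" and \<phi> :: "'e \<Rightarrow> nat" where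
    fgb: "finite_graph Vb (\<phi> ` E) srcb tgtb" and iphi: "inj_on \<phi> E" and
    HH: "H1 Vb (\<phi> ` E) srcb tgtb = transp E \<phi> ` H1 V E src tgt"
    using transport[OF assms(2)] by blast
  define wb where "wb = (\<lambda>n. rat_of_int (- k (inv_into E \<phi> n)))"
  define hs where "hs = (\<lambda>i. transp E \<phi> (gs i))"
  have wpos: "\<forall>n\<in>\<phi> ` E. 0 < wb n" using k iphi by (auto simp: wb_def)
  have basis: "H1_basis Vb (\<phi> ` E) srcb tgtb hs"
    unfolding hs_def by (rule basis_transport[OF iphi HH assms(3)])
  define A where "A = (\<lambda>c::'e \<Rightarrow> int. (\<chi> i. \<Sum>e\<in>E. real_of_int (c e * gs i e) * real_of_int (k e)) :: real ^ 'n)"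
  define J where "J = (\<lambda>c::'e \<Rightarrow> int. (\<chi> i. \<Sum>e\<in>E. real_of_int (- k e) * real_of_int (c e) * real_of_int (gs i e)) :: real ^ 'n)"
  have trop: "trop_lattice av (fibre_lattice V E src tgt b gs) = A ` H1 V E src tgt"
  proof -
    have "(\<lambda>y. \<chi> i. loga av (y $ i)) (sigma_coords E b gs c) = A c" for c
    proof -
      have "loga av (\<Prod>e\<in>E. b e powi (c e * gs i e)) = (\<Sum>e\<in>E. real_of_int (c e * gs i e) * real_of_int (k e))" for i
        using loga_prod[OF nl fE bnz, of "\<lambda>e. c e * gs i e"] k by (simp cong: sum.cong)
      then show ?thesis by (simp add: sigma_coords_def A_def)
    qed
    then show ?thesis unfolding trop_lattice_def fibre_lattice_def image_image by simp
  qed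
  have jac: "jacobian_lattice Vb (\<phi> ` E) srcb tgtb wb hs = J ` H1 V E src tgt"
  proof -
    have "(\<lambda>c. \<chi> i. \<Sum>e\<in>\<phi> ` E. real_of_rat (wb e) * real_of_int (c e) * real_of_int (hs i e)) (transp E \<phi> c) = J c" for c
    proof -
      have "(\<Sum>n\<in>\<phi> ` E. real_of_rat (wb n) * real_of_int (transp E \<phi> c n) * real_of_int (hs i n))
          = (\<Sum>e\<in>E. real_of_int (- k e) * real_of_int (c e) * real_of_int (gs i e))" for i
      proof -
        have "(\<Sum>n\<in>\<phi> ` E. real_of_rat (wb n) * real_of_int (transp E \<phi> c n) * real_of_int (hs i n))
          = (\<Sum>e\<in>E. real_of_rat (wb (\<phi> e)) * real_of_int (transp E \<phi> c (\<phi> e)) * real_of_int (hs i (\<phi> e)))"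
          using iphi by (simp add: sum.reindex)
        also have "\<dots> = (\<Sum>e\<in>E. real_of_int (- k e) * real_of_int (c e) * real_of_int (gs i e))"
          using iphi by (intro sum.cong) (auto simp: transp_phi hs_def wb_def of_rat_minus)
        finally show ?thesis .
      qed
      then show ?thesis by (simp add: J_def)
    qed
    then show ?thesis unfolding jacobian_lattice_def HH image_image by simp
  qed
  have "J ` H1 V E src tgt = A ` H1 V E src tgt"
    by (rule image_neg_eq) (auto simp: A_def J_def H1_uminus intro!: sum.cong)
  then have eq: "trop_lattice av (fibre_lattice V E src tgt b gs) = jacobian_lattice Vb (\<phi> ` E) srcb tgtb wb hs"
    using trop jac by simp
  have iso: "torus_mp_iso (trop_lattice av (fibre_lattice V E src tgt b gs)) (jacobian_lattice Vb (\<phi> ` E) srcb tgtb wb hs)"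
    unfolding torus_mp_iso_def
  proof (intro exI[of _ id] conjI)
    show "distr lborel lborel id = lborel" using distr_id[of lborel] by (simp add: id_def)
  qed (auto simp: eq continuous_on_id)
  show ?thesis using fgb wpos basis iso by blast
qed

end
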